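(* Let $$A= \begin{pmatrix} 1& -2& 2\\ 2&-1& 2\\ 2&-2& 3 \end{pmatrix},\quad B= \begin{pmatrix} 1& 2& 2\\ 2&1& 2\\ 2&2& 3 \end{pmatrix},\quad C= \begin{pmatrix} -1& 2& 2\\ -2&1& 2\\ -2&2& 3 \end{pmatrix},$$ and let $P=(x,y,z)$ be a primitive Pythagorean triple. Then the points of $\mathbb{R}^3$ with coordinates $AP^\top$, $BP^\top$, $CP^\top$ form a triangle that is not a right triangle (none of its angles equals $\pi/2$).
   Context: A primitive Pythagorean triple is a triple $(x,y,z)$ of positive integers with $x^2+y^2=z^2$, $\gcd(x,y)=1$ and $x$ odd. Triples are regarded as row vectors and $\top$ denotes transpose; $\mathbb{R}^3$ carries the Euclidean metric. *)

theory Defs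
  imports "HOL-Analysis.Analysis"
begin

definition primitive_pythagorean_triple :: "int \<Rightarrow> int \<Rightarrow> int \<Rightarrow> bool" where
  "primitive_pythagorean_triple x y z \<longleftrightarrow>
     x > 0 \<and> y > 0 \<and> z > 0 \<and> x\<^sup>2 + y\<^sup>2 = z\<^sup>2 \<and> gcd x y = 1 \<and> odd x"

definition vangle :: "'a::real_inner \<Rightarrow> 'a \<Rightarrow> real" where
  "vangle u v = arccos ((u \<bullet> v) / (norm u * norm v))"

definition is_triangle :: "'a::real_inner \<Rightarrow> 'a \<Rightarrow> 'a \<Rightarrow> bool" where
  "is_triangle a b c \<longleftrightarrow> \<not> collinear {a, b, c}"

definition is_right_triangle :: "'a::real_inner \<Rightarrow> 'a \<Rightarrow> 'a \<Rightarrow> bool" where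
  "is_right_triangle a b c \<longleftrightarrow>
     vangle (b - a) (c - a) = pi/2 \<or> vangle (a - b) (c - b) = pi/2 \<or> vangle (a - c) (b - c) = pi/2"

definition matA :: "real^3^3" where
  "matA = vector [vector [1, -2, 2], vector [2, -1, 2], vector [2, -2, 3]]"
definition matB :: "real^3^3" where
  "matB = vector [vector [1, 2, 2], vector [2, 1, 2], vector [2, 2, 3]]"
definition matC :: "real^3^3" where
  "matC = vector [vector [-1, 2, 2], vector [-2, 1, 2], vector [-2, 2, 3]]"

end

theory Submission
  imports Defs
begin

lemma vangle_right: "vangle (u::'a::real_inner) v = pi/2 \<Longrightarrow> u \<bullet> v = 0"
proof -
  assume h: "vangle u v = pi/2"
  define t where "t = (u \<bullet> v) / (norm u * norm v)"
  have t1: "\<bar>t\<bar> \<le> 1"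
  proof (cases "norm u * norm v = 0")
    case True
    then have "u = 0 \<or> v = 0" by simp
    then have "u \<bullet> v = 0" by auto
    then show ?thesis by (simp add: t_def)
  next
    case False
    then have "norm u * norm v > 0" by (simp add: less_le)
    have "\<bar>t\<bar> = \<bar>u \<bullet> v\<bar> / (norm u * norm v)"
      unfolding t_def by (simp add: abs_divide)
    also have "\<dots> \<le> 1" using Cauchy_Schwarz_ineq2[of u v] \<open>norm u * norm v > 0\<close>
      by (simp add: pos_divide_le_eq)
    finally show ?thesis .
  qed
  have "cos (arccos t) = t" using t1 by (intro cos_arccos) auto
  moreover have "arccos t = pi/2" using h by (simp add: vangle_def t_def)
  ultimately have "t = 0" by simp
  then show ?thesis by (auto simp: t_def)
qed

lemma vec3_eq: "(a::real^3) = b \<longleftrightarrow> a$1 = b$1 \<and> a$2 = b$2 \<and> a$3 = b$3"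
  by (auto simp: vec_eq_iff forall_3)

lemma inner3: "(a::real^3) \<bullet> b = a$1*b$1 + a$2*b$2 + a$3*b$3"
  by (simp add: inner_vec_def sum_3)

theorem mainTheorem13:
  fixes x y z :: int
  assumes "primitive_pythagorean_triple x y z"
  defines "P \<equiv> (vector [real_of_int x, real_of_int y, real_of_int z] :: real^3)"
  shows "is_triangle (matA *v P) (matB *v P) (matC *v P) \<and>
         \<not> is_right_triangle (matA *v P) (matB *v P) (matC *v P)"
proof -
  note pp = assms(1)[unfolded primitive_pythagorean_triple_def]
  define X where "X = real_of_int x"
  define Y where "Y = real_of_int y"
  define Z where "Z = real_of_int z"
  have XY: "X > 0" "Y > 0" using pp by (auto simp: X_def Y_def)
  define a where "a = matA *v P"
  define b where "b = matB *v P"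
  define c where "c = matC *v P"
  have a: "a$1 = X - 2*Y + 2*Z" "a$2 = 2*X - Y + 2*Z" "a$3 = 2*X - 2*Y + 3*Z"
    by (simp_all add: a_def matA_def P_def matrix_vector_mult_def sum_3 X_def Y_def Z_def)
  have b: "b$1 = X + 2*Y + 2*Z" "b$2 = 2*X + Y + 2*Z" "b$3 = 2*X + 2*Y + 3*Z"
    by (simp_all add: b_def matB_def P_def matrix_vector_mult_def sum_3 X_def Y_def Z_def)
  have c: "c$1 = - X + 2*Y + 2*Z" "c$2 = - 2*X + Y + 2*Z" "c$3 = - 2*X + 2*Y + 3*Z"
    by (simp_all add: c_def matC_def P_def matrix_vector_mult_def sum_3 X_def Y_def Z_def)
  have tri: "\<not> collinear {a, b, c}"
  proof
    assume "collinear {a, b, c}"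
    then have "collinear {0, a - b, c - b}" by (simp add: collinear_3)
    then consider "a - b = 0" | "c - b = 0" | t where "c - b = t *\<^sub>R (a - b)"
      by (auto simp: collinear_lemma)
    then show False
    proof cases
      case 1 then show ?thesis using XY a b by (simp add: vec3_eq)
    next
      case 2 then show ?thesis using XY c b by (simp add: vec3_eq)
    next
      case 3
      then have "(c-b)$1 = t*(a-b)$1" "(c-b)$2 = t*(a-b)$2" by simp_all
      then have e1: "-2*X = t*(-4*Y)" and e2: "-4*X = t*(-2*Y)"
        using a b c by simp_all
      then have "t*Y = 0" by (simp add: algebra_simps)
      then show ?thesis using e1 XY by simp
    qed
  qed
  have da: "(b - a) \<bullet> (c - a) = 4*Y*(9*Y - 8*X)"
    by (simp add: inner3 a b c algebra_simps)
  have db: "(a - b) \<bullet> (c - b) = 32*X*Y"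
    by (simp add: inner3 a b c algebra_simps)
  have dc: "(a - c) \<bullet> (b - c) = 4*X*(9*X - 8*Y)"
    by (simp add: inner3 a b c algebra_simps)
  have n1: "9*y \<noteq> 8*x"
  proof
    assume h: "9*y = 8*x"
    then have "(8::int) dvd 9*y" by simp
    then have "8 dvd y" by presburger
    then obtain k where k: "y = 8*k" by blast
    with h have xk: "x = 9*k" by simp
    have "k dvd gcd x y" using k xk by simp
    then have "k dvd 1" using pp by simp
    moreover have "k > 0" using pp k by simp
    ultimately have "k = 1" by (simp add: zdvd1_eq)
    then have "z^2 = 145" using pp k xk by simp
    moreover have "z \<le> 12 \<or> z \<ge> 13" by linarith
    moreover have "z \<le> 12 \<Longrightarrow> z^2 \<le> 144"
      using pp power_mono[of z 12 2] by simp
    moreover have "z \<ge> 13 \<Longrightarrow> 169 \<le> z^2"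
      using power_mono[of 13 z 2] by simp
    ultimately show False by linarith
  qed
  have n2: "9*x \<noteq> 8*y"
  proof
    assume "9*x = 8*y"
    then have "even (9*x)" by simp
    then show False using pp by simp
  qed
  have "9*Y - 8*X \<noteq> 0" using n1 unfolding X_def Y_def by linarith
  moreover have "9*X - 8*Y \<noteq> 0" using n2 unfolding X_def Y_def by linarith
  ultimately have "(b - a) \<bullet> (c - a) \<noteq> 0" "(a - b) \<bullet> (c - b) \<noteq> 0"
      "(a - c) \<bullet> (b - c) \<noteq> 0" using XY da db dc by simp_all
  then have "\<not> is_right_triangle a b c"
    unfolding is_right_triangle_def using vangle_right[of "b - a" "c - a"]
      vangle_right[of "a - b" "c - b"] vangle_right[of "a - c" "b - c"] by blast
  then show ?thesis using tri unfolding is_triangle_def a_def b_def c_def by blast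
qed

end
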